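(* Let $\beta>1$ and let $\epsilon>0$ be fixed and arbitrarily small. The rate $R=(p_c-2\epsilon)(1-1/\beta)$ is achievable for the outer channel. More precisely, take $k=n(p_c-2\epsilon)$ and $w=l-\log_2 n=l(1-1/\beta)$, assuming integrality. Then there is a family of codes with these parameters such that $\mathbb{P}(\widehat{\mathbf{U}}\ne\mathbf{U})\to 0$ as $n\to\infty$.
   Context: The outer channel takes as input a binary matrix $\mathbf{X}\in\mathbb{F}_2^{n\times l}$ with rows $\mathbf{x}_1,\dots,\mathbf{x}_n$ and acts in two stages. Channel-1 acts independently on each row and outputs $\mathbf{y}_i$, where - $\mathbf{y}_i=\mathbf{x}_i$ with probability $p_c$; - $\mathbf{y}_i=?$ (an erased row) with probability $p_e$; - $\mathbf{y}_i=\mathbf{e}$ with probability $p_s/(2^l-1)$ for each $\mathbf{e}\in\mathbb{F}_2^l\setminus\{\mathbf{x}_i\}$. Here $p_c+p_e+p_s=1$, the probabilities $p_c,p_e,p_s$ are fixed, and $p_c>p_s/(2^l-1)$. Channel-2 takes the $n$-row matrix $\mathbf{Y}$ (erased rows kept as "?") and outputs $\mathbf{Z}$, a uniformly random permutation of its rows (each of the $n!$ permutations has probability $1/n!$). A code maps $\mathbf{U}\in\mathbb{F}_2^{k\times w}$ injectively to $\mathbf{X}\in\mathbb{F}_2^{n\times l}$ and comes with a decoder $\mathbf{Z}\mapsto\widehat{\mathbf{U}}$. Its rate is $R=kw/(nl)$. We set $\beta=l/\log_2 n$, held fixed as $n\to\infty$. A rate $R$ is achievable if some family of rate-$R$ codes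 has error probability, for uniformly distributed $\mathbf{U}$, tending to $0$ as $n\to\infty$. *)

theory Defs
  imports "HOL-Probability.Probability" "HOL-Combinatorics.Permutations"
begin

text \<open>Rows of binary matrices are bool lists of length l; an n x l matrix is a list
of n rows. A channel-1 output row is an option: None is the erased row "?".\<close>

definition is_matrix :: "nat \<Rightarrow> nat \<Rightarrow> bool list list \<Rightarrow> bool" where
  "is_matrix r c M \<longleftrightarrow> length M = r \<and> (\<forall>row\<in>set M. length row = c)"

definition ch1_row :: "real \<Rightarrow> real \<Rightarrow> real \<Rightarrow> nat \<Rightarrow> bool list \<Rightarrow> bool list option pmf" where
  "ch1_row pc pe ps l x = embed_pmf (\<lambda>y. case y of
       None \<Rightarrow> pe
     | Some e \<Rightarrow> (if e = x then pc
                  else if length e = l then ps / (2 ^ l - 1) else 0))"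

definition ch1 :: "real \<Rightarrow> real \<Rightarrow> real \<Rightarrow> nat \<Rightarrow> bool list list \<Rightarrow> bool list option list pmf" where
  "ch1 pc pe ps l X = foldr (\<lambda>x M. bind_pmf (ch1_row pc pe ps l x) (\<lambda>y. map_pmf (Cons y) M))
                          X (return_pmf [])"

definition ch2 :: "'a list \<Rightarrow> 'a list pmf" where
  "ch2 Y = map_pmf (\<lambda>\<sigma>. map (\<lambda>i. Y ! \<sigma> i) [0..<length Y])
                   (pmf_of_set {\<sigma>. \<sigma> permutes {..<length Y}})"

definition outer_channel :: "real \<Rightarrow> real \<Rightarrow> real \<Rightarrow> nat \<Rightarrow> bool list list \<Rightarrow> bool list option list pmf" where
  "outer_channel pc pe ps l X = bind_pmf (ch1 pc pe ps l X) ch2"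

definition is_code :: "nat \<Rightarrow> nat \<Rightarrow> nat \<Rightarrow> nat \<Rightarrow> (bool list list \<Rightarrow> bool list list) \<Rightarrow> bool" where
  "is_code n l k w enc \<longleftrightarrow>
     (\<forall>U. is_matrix k w U \<longrightarrow> is_matrix n l (enc U)) \<and> inj_on enc {U. is_matrix k w U}"

definition error_prob :: "real \<Rightarrow> real \<Rightarrow> real \<Rightarrow> nat \<Rightarrow> nat \<Rightarrow> nat \<Rightarrow>
     (bool list list \<Rightarrow> bool list list) \<Rightarrow> (bool list option list \<Rightarrow> bool list list) \<Rightarrow> real" where
  "error_prob pc pe ps l k w enc dec =
     measure_pmf.prob
       (bind_pmf (pmf_of_set {U. is_matrix k w U})
          (\<lambda>U. map_pmf (\<lambda>Z. dec Z \<noteq> U) (outer_channel pc pe ps l (enc U))))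
       {True}"

end

theory Submission
  imports Defs "HOL-Probability.Hoeffding"
begin



lemma prob_bind_pmf:
  "measure_pmf.prob (bind_pmf M f) A = measure_pmf.expectation M (\<lambda>x. measure_pmf.prob (f x) A)"
proof -
  have "emeasure (measure_pmf (bind_pmf M f)) A = (\<integral>\<^sup>+x. ennreal (measure_pmf.prob (f x) A) \<partial>M)"
    unfolding emeasure_bind_pmf by (simp add: measure_pmf.emeasure_eq_measure)
  also have "... = ennreal (measure_pmf.expectation M (\<lambda>x. measure_pmf.prob (f x) A))"
    by (intro nn_integral_eq_integral measure_pmf.integrable_const_bound[where B=1]) auto
  finally have "ennreal (measure_pmf.prob (bind_pmf M f) A) = ennreal (measure_pmf.expectation M (\<lambda>x. measure_pmf.prob (f x) A))"
    by (simp add: measure_pmf.emeasure_eq_measure)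
  then show ?thesis by (subst (asm) ennreal_inj) (auto intro: integral_nonneg_AE)
qed

lemma prob_bind_le:
  assumes "\<And>y z. y \<in> set_pmf p \<Longrightarrow> z \<in> set_pmf (f y) \<Longrightarrow> z \<in> E \<Longrightarrow> y \<in> F"
  shows "measure_pmf.prob (bind_pmf p f) E \<le> measure_pmf.prob p F"
proof -
  have "measure_pmf.prob (bind_pmf p f) E = measure_pmf.expectation p (\<lambda>y. measure_pmf.prob (f y) E)"
    by (rule prob_bind_pmf)
  also have "... \<le> measure_pmf.expectation p (indicator F)"
  proof (rule integral_mono_AE)
    show "integrable (measure_pmf p) (\<lambda>y. measure_pmf.prob (f y) E)"
      by (intro measure_pmf.integrable_const_bound[where B=1]) auto
    show "integrable (measure_pmf p) (indicator F :: _ \<Rightarrow> real)"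
      by (intro measure_pmf.integrable_const_bound[where B=1]) (auto simp: indicator_def)
    show "AE y in measure_pmf p. measure_pmf.prob (f y) E \<le> indicator F y"
    proof (rule AE_pmfI)
      fix y assume y: "y \<in> set_pmf p"
      show "measure_pmf.prob (f y) E \<le> indicator F y"
      proof (cases "y \<in> F")
        case False
        have "measure_pmf.prob (f y) E = 0"
          using assms[OF y] False by (subst measure_pmf_zero_iff) auto
        then show ?thesis by simp
      qed simp
    qed
  qed
  also have "... = measure_pmf.prob p F" by simp
  finally show ?thesis .
qed




definition rowsS :: "nat \<Rightarrow> bool list set" where "rowsS l = {r. length r = l}"

lemma rowsS_finite[simp]: "finite (rowsS l)"
  and rowsS_card: "card (rowsS l) = 2 ^ l"
proof -
  have eq: "rowsS l = {xs. set xs \<subseteq> (UNIV::bool set) \<and> length xs = l}" by (auto simp: rowsS_def)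
  show "finite (rowsS l)" unfolding eq by (rule finite_lists_length_eq) simp
  show "card (rowsS l) = 2 ^ l" unfolding eq by (subst card_lists_length_eq) auto
qed

lemma rowsS_nonempty[simp]: "rowsS l \<noteq> {}"
  by (auto simp: rowsS_def intro: exI[of _ "replicate l True"])

locale chan =
  fixes pc pe ps :: real and l :: nat
  assumes pc: "pc \<ge> 0" and pe: "pe \<ge> 0" and ps: "ps \<ge> 0" and sum1: "pc + pe + ps = 1"
    and l: "l \<ge> 1"
begin

definition fr :: "bool list \<Rightarrow> bool list option \<Rightarrow> real" where
  "fr x = (\<lambda>y. case y of
       None \<Rightarrow> pe
     | Some e \<Rightarrow> (if e = x then pc
                  else if length e = l then ps / (2 ^ l - 1) else 0))"

lemma fr_nonneg: "0 \<le> fr x y"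
  using pc pe ps by (auto simp: fr_def split: option.splits)

lemma fr_sum:
  assumes x: "length x = l"
  shows "(\<integral>\<^sup>+y. ennreal (fr x y) \<partial>count_space UNIV) = 1"
proof -
  define A where "A = insert None (Some ` rowsS l)"
  have fA: "finite A" by (simp add: A_def)
  have "(\<integral>\<^sup>+y. ennreal (fr x y) \<partial>count_space UNIV) = (\<integral>\<^sup>+y. ennreal (fr x y) \<partial>count_space A)"
    by (rule nn_integral_count_space_eq[symmetric])
       (auto simp: A_def fr_def rowsS_def x split: option.splits)
  also have "... = (\<Sum>y\<in>A. ennreal (fr x y))" by (rule nn_integral_count_space_finite[OF fA])
  also have "... = ennreal (\<Sum>y\<in>A. fr x y)" by (rule sum_ennreal) (rule fr_nonneg)
  also have "(\<Sum>y\<in>A. fr x y) = 1"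
  proof -
    have "(\<Sum>y\<in>A. fr x y) = fr x None + (\<Sum>y\<in>Some ` rowsS l. fr x y)"
      unfolding A_def by (subst sum.insert) auto
    also have "(\<Sum>y\<in>Some ` rowsS l. fr x y) = (\<Sum>e\<in>rowsS l. fr x (Some e))"
      by (subst sum.reindex) (auto simp: inj_on_def)
    also have "... = fr x (Some x) + (\<Sum>e\<in>rowsS l - {x}. fr x (Some e))"
      by (rule sum.remove[OF rowsS_finite]) (simp add: rowsS_def x)
    also have "(\<Sum>e\<in>rowsS l - {x}. fr x (Some e)) = (\<Sum>e\<in>rowsS l - {x}. ps / (2 ^ l - 1))"
      by (rule sum.cong) (auto simp: fr_def rowsS_def)
    also have "... = (2 ^ l - 1) * (ps / (2 ^ l - 1))"
    proof -
      have "x \<in> rowsS l" using x by (simp add: rowsS_def)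
      then have "card (rowsS l - {x}) = 2 ^ l - 1" by (simp add: card_Diff_singleton rowsS_card)
      then show ?thesis using l by (simp add: of_nat_diff)
    qed
    also have "... = ps"
    proof -
      have "(2::real) ^ l \<ge> 2 ^ 1" using l by (intro power_increasing) auto
      then show ?thesis by simp
    qed
    finally show ?thesis using sum1 by (simp add: fr_def)
  qed
  finally show ?thesis by simp
qed

lemma ch1_row_eq: "ch1_row pc pe ps l x = embed_pmf (fr x)"
  unfolding ch1_row_def fr_def by simp

lemma pmf_ch1_row:
  assumes "length x = l"
  shows "pmf (ch1_row pc pe ps l x) y = fr x y"
  unfolding ch1_row_eq by (rule pmf_embed_pmf[OF fr_nonneg fr_sum[OF assms]])

lemma ch1_row_bernoulli:
  assumes "length x = l"
  shows "map_pmf (\<lambda>y. y = Some x) (ch1_row pc pe ps l x) = bernoulli_pmf pc"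
proof (rule pmf_eqI)
  have pc1: "pc \<le> 1" using sum1 pe ps by linarith
  fix b :: bool
  have T: "pmf (map_pmf (\<lambda>y. y = Some x) (ch1_row pc pe ps l x)) True = pc"
  proof -
    have "pmf (map_pmf (\<lambda>y. y = Some x) (ch1_row pc pe ps l x)) True
        = measure_pmf.prob (ch1_row pc pe ps l x) {Some x}"
      by (subst pmf_map) (auto intro: arg_cong2[where f=measure_pmf.prob])
    also have "... = pc" by (simp add: measure_pmf_single pmf_ch1_row[OF assms] fr_def)
    finally show ?thesis .
  qed
  show "pmf (map_pmf (\<lambda>y. y = Some x) (ch1_row pc pe ps l x)) b = pmf (bernoulli_pmf pc) b"
  proof (cases b)
    case True then show ?thesis using T pc pc1 by simp
  next
    case False
    have "pmf (map_pmf (\<lambda>y. y = Some x) (ch1_row pc pe ps l x)) False =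
          1 - pmf (map_pmf (\<lambda>y. y = Some x) (ch1_row pc pe ps l x)) True"
      using pmf_False_conv_True by blast
    then show ?thesis using False T pc pc1 by simp
  qed
qed

end




fun cnt :: "bool list list \<Rightarrow> bool list option list \<Rightarrow> nat" where
  "cnt (x#X) (y#Y) = (if y = Some x then 1 else 0) + cnt X Y"
| "cnt _ _ = 0"

lemma ch1_Nil[simp]: "ch1 pc pe ps l [] = return_pmf []"
  by (simp add: ch1_def)
lemma ch1_Cons: "ch1 pc pe ps l (x#X) = bind_pmf (ch1_row pc pe ps l x) (\<lambda>y. map_pmf (Cons y) (ch1 pc pe ps l X))"
  by (simp add: ch1_def)

lemma set_pmf_ch1: "Y \<in> set_pmf (ch1 pc pe ps l X) \<Longrightarrow> length Y = length X"
  by (induction X arbitrary: Y) (auto simp: ch1_Cons)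

lemma ch2_support:
  assumes "Z \<in> set_pmf (ch2 Y)"
  shows "set Z = set Y" "length Z = length Y"
proof -
  have fin: "finite {\<sigma>. \<sigma> permutes {..<length Y}}" by (rule finite_permutations) simp
  have ne: "{\<sigma>. \<sigma> permutes {..<length Y}} \<noteq> {}" using permutes_id by blast
  obtain \<sigma> where s: "\<sigma> permutes {..<length Y}" and Z: "Z = map (\<lambda>i. Y ! \<sigma> i) [0..<length Y]"
    using assms fin ne unfolding ch2_def by auto
  show "length Z = length Y" using Z by simp
  have "set Z = (\<lambda>i. Y ! i) ` (\<sigma> ` {..<length Y})" using Z by (auto simp: image_image atLeast0LessThan)
  also have "\<sigma> ` {..<length Y} = {..<length Y}" by (rule permutes_image[OF s])
  also have "(\<lambda>i. Y ! i) ` {..<length Y} = set Y" by (auto simp: in_set_conv_nth)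
  finally show "set Z = set Y" .
qed

context chan
begin

lemma ch1_binomial:
  assumes "\<forall>x\<in>set X. length x = l"
  shows "map_pmf (cnt X) (ch1 pc pe ps l X) = binomial_pmf (length X) pc"
  using assms
proof (induction X)
  case Nil
  have pc01: "pc \<in> {0..1}" using pc pe ps sum1 by auto
  then show ?case by (simp add: binomial_pmf_0)
next
  case (Cons x X)
  have pc01: "pc \<in> {0..1}" using pc pe ps sum1 by auto
  have "map_pmf (cnt (x#X)) (ch1 pc pe ps l (x#X)) =
        bind_pmf (ch1_row pc pe ps l x) (\<lambda>y. map_pmf (\<lambda>k. (if y = Some x then 1 else 0) + k)
            (map_pmf (cnt X) (ch1 pc pe ps l X)))"
    by (simp add: ch1_Cons map_bind_pmf pmf.map_comp o_def)
  also have "... = bind_pmf (ch1_row pc pe ps l x) (\<lambda>y. map_pmf (\<lambda>k. (if y = Some x then 1 else 0) + k)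
            (binomial_pmf (length X) pc))"
    using Cons by simp
  also have "... = bind_pmf (map_pmf (\<lambda>y. y = Some x) (ch1_row pc pe ps l x))
      (\<lambda>b. map_pmf (\<lambda>k. (if b then 1 else 0) + k) (binomial_pmf (length X) pc))"
    by (simp add: bind_map_pmf)
  also have "... = binomial_pmf (length (x#X)) pc"
  proof -
    have "length x = l" using Cons.prems by simp
    then have e: "map_pmf (\<lambda>y. y = Some x) (ch1_row pc pe ps l x) = bernoulli_pmf pc"
      by (rule ch1_row_bernoulli)
    show ?thesis unfolding e by (simp add: binomial_pmf_Suc[OF pc01] map_pmf_def)
  qed
  finally show ?case .
qed

end




definition goodc :: "bool list list \<Rightarrow> bool list option list \<Rightarrow> nat" where
  "goodc X Z = length (filter (\<lambda>r. Some r \<in> set Z) X)"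

lemma length_filter_mono_pred:
  "(\<And>x. P x \<Longrightarrow> Q x) \<Longrightarrow> length (filter P xs) \<le> length (filter Q xs)"
  by (induction xs) auto

lemma cnt_le_goodc: "length Y = length X \<Longrightarrow> cnt X Y \<le> goodc X Y"
proof (induction Y X rule: list_induct2)
  case Nil
  then show ?case by simp
next
  case (Cons y Y x X)
  have "length (filter (\<lambda>r. Some r \<in> set Y) X) \<le> length (filter (\<lambda>r. Some r \<in> set (y#Y)) X)"
    by (rule length_filter_mono_pred) auto
  then show ?case using Cons.IH by (auto simp: goodc_def)
qed

context chan begin

lemma tail_bound:
  fixes \<epsilon> :: real
  assumes X: "\<forall>x\<in>set X. length x = l" and n: "length X = n" "n > 0" and e: "\<epsilon> \<ge> 0"
  shows "measure_pmf.prob (outer_channel pc pe ps l X) {Z. real (goodc X Z) < (pc - \<epsilon>) * n}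
         \<le> exp (-2 * real n * \<epsilon>^2)"
proof -
  have pc01: "pc \<in> {0..1}" using pc pe ps sum1 by auto
  have "measure_pmf.prob (outer_channel pc pe ps l X) {Z. real (goodc X Z) < (pc - \<epsilon>) * n}
      \<le> measure_pmf.prob (ch1 pc pe ps l X) {Y. real (cnt X Y) < (pc - \<epsilon>) * n}"
    unfolding outer_channel_def
  proof (rule prob_bind_le)
    fix Y Z assume Y: "Y \<in> set_pmf (ch1 pc pe ps l X)" and Z: "Z \<in> set_pmf (ch2 Y)"
      and E: "Z \<in> {Z. real (goodc X Z) < (pc - \<epsilon>) * n}"
    have "goodc X Z = goodc X Y" using ch2_support[OF Z] by (simp add: goodc_def)
    moreover have "cnt X Y \<le> goodc X Y" using set_pmf_ch1[OF Y] by (rule cnt_le_goodc)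
    ultimately show "Y \<in> {Y. real (cnt X Y) < (pc - \<epsilon>) * n}" using E by auto
  qed
  also have "... = measure_pmf.prob (map_pmf (cnt X) (ch1 pc pe ps l X)) {m. real m < (pc - \<epsilon>) * n}"
    by simp
  also have "... = measure_pmf.prob (binomial_pmf n pc) {m. real m < (pc - \<epsilon>) * n}"
    using ch1_binomial[OF X] n by simp
  also have "... \<le> measure_pmf.prob (binomial_pmf n pc) {m. real m / n \<le> pc - \<epsilon>}"
    using n by (intro measure_pmf.finite_measure_mono) (auto simp: field_simps)
  also have "... \<le> exp (-2 * real n * \<epsilon>^2)"
    using binomial_distribution.prob_le'[of pc n \<epsilon>] pc01 n e by (simp add: binomial_distribution_def)
  finally show ?thesis .
qed

end



fun rm :: "nat \<Rightarrow> nat \<Rightarrow> bool list list pmf" where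
  "rm l 0 = return_pmf []"
| "rm l (Suc n) = bind_pmf (pmf_of_set (rowsS l)) (\<lambda>r. map_pmf (Cons r) (rm l n))"

lemma set_pmf_rowsS[simp]: "set_pmf (pmf_of_set (rowsS l)) = rowsS l"
  by simp

lemma set_rm: "X \<in> set_pmf (rm l n) \<Longrightarrow> is_matrix n l X"
  by (induction n arbitrary: X) (auto simp: is_matrix_def, auto simp: rowsS_def)

lemma rm_count:
  assumes S: "finite S" "real (card S) \<le> m"
  shows "measure_pmf.prob (rm l n) {X. t \<le> length (filter (\<lambda>r. r \<in> S) X)}
         \<le> real (n choose t) * (m / 2^l)^t"
proof (induction n arbitrary: t)
  case 0
  then show ?case by (cases t) (auto simp: measure_pmf_single)
next
  case (Suc n)
  have m0: "m \<ge> 0" using S(2) of_nat_0_le_iff order_trans by blast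
  define q where "q = m / 2^l"
  have q0: "q \<ge> 0" using m0 by (simp add: q_def)
  show ?case
  proof (cases t)
    case 0
    then show ?thesis by simp
  next
    case (Suc t')
    define g where "g = (\<lambda>r. measure_pmf.prob (rm l n) {X. t \<le> length (filter (\<lambda>r. r \<in> S) (r#X))})" 
    define a where "a = real (n choose t') * q^t'"
    define b where "b = real (n choose t) * q^t"
    have a0: "a \<ge> 0" and b0: "b \<ge> 0" using q0 by (auto simp: a_def b_def)
    have g: "g r \<le> (if r \<in> S then a else 0) + b" for r
    proof (cases "r \<in> S")
      case True
      have "g r = measure_pmf.prob (rm l n) {X. t' \<le> length (filter (\<lambda>r. r \<in> S) X)}"
        using True Suc by (simp add: g_def)
      also have "... \<le> a" using Suc.IH[of t'] by (simp add: a_def q_def)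
      finally show ?thesis using True b0 by simp
    next
      case False
      have "g r = measure_pmf.prob (rm l n) {X. t \<le> length (filter (\<lambda>r. r \<in> S) X)}"
        using False by (simp add: g_def)
      also have "... \<le> b" using Suc.IH[of t] by (simp add: b_def q_def)
      finally show ?thesis using False by simp
    qed
    have "measure_pmf.prob (rm l (Suc n)) {X. t \<le> length (filter (\<lambda>r. r \<in> S) X)}
        = measure_pmf.expectation (pmf_of_set (rowsS l)) g"
      by (simp add: prob_bind_pmf g_def vimage_def)
    also have "... = (\<Sum>r\<in>rowsS l. g r) / 2^l"
      by (simp add: integral_pmf_of_set rowsS_card)
    also have "... \<le> (\<Sum>r\<in>rowsS l. (if r \<in> S then a else 0) + b) / 2^l"
      by (intro divide_right_mono sum_mono g) auto
    also have "(\<Sum>r\<in>rowsS l. (if r \<in> S then a else 0) + b) = real (card (rowsS l \<inter> S)) * a + 2^l * b"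
      by (simp add: sum.distrib sum.If_cases rowsS_card)
    also have "... \<le> m * a + 2^l * b"
    proof -
      have "real (card (rowsS l \<inter> S)) \<le> real (card S)" using S(1) by (simp add: card_mono)
      then have "real (card (rowsS l \<inter> S)) \<le> m" using S(2) by linarith
      then show ?thesis using a0 by (simp add: mult_right_mono)
    qed
    also have "(m * a + 2^l * b) / 2^l = q * a + b" by (simp add: q_def field_simps)
    also have "q * a + b = real (Suc n choose t) * q^t"
      by (simp add: a_def b_def Suc algebra_simps)
    finally show ?thesis by (simp add: q_def divide_right_mono)
  qed
qed




lemma prob_pair_pmf:
  "measure_pmf.prob (pair_pmf A B) E = measure_pmf.expectation A (\<lambda>a. measure_pmf.prob B {b. (a,b) \<in> E})"
proof -
  have "pair_pmf A B = bind_pmf A (\<lambda>a. map_pmf (Pair a) B)"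
    by (simp add: pair_pmf_def map_pmf_def)
  then show ?thesis by (simp add: prob_bind_pmf vimage_def)
qed

lemma swap_exp:
  "measure_pmf.expectation A (\<lambda>a. measure_pmf.prob B {b. P a b}) =
   measure_pmf.expectation B (\<lambda>b. measure_pmf.prob A {a. P a b})"
proof -
  have "measure_pmf.expectation A (\<lambda>a. measure_pmf.prob B {b. P a b}) =
        measure_pmf.prob (pair_pmf A B) {(a,b). P a b}"
    by (simp add: prob_pair_pmf)
  also have "... = measure_pmf.prob (pair_pmf B A) {(b,a). P a b}"
    by (subst pair_commute_pmf) (simp add: vimage_def case_prod_unfold)
  also have "... = measure_pmf.expectation B (\<lambda>b. measure_pmf.prob A {a. P a b})"
    by (simp add: prob_pair_pmf)
  finally show ?thesis .
qed

lemma exists_le_expectation: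
  fixes g :: "'a \<Rightarrow> real"
  assumes "integrable (measure_pmf p) g"
  shows "\<exists>x\<in>set_pmf p. g x \<le> measure_pmf.expectation p g"
proof (rule ccontr)
  assume "\<not> ?thesis"
  then have "AE x in measure_pmf p. measure_pmf.expectation p g < g x"
    by (auto intro!: AE_pmfI)
  then have "measure_pmf.expectation p (\<lambda>_. measure_pmf.expectation p g) < measure_pmf.expectation p g"
    using assms by (intro measure_pmf.integral_less_AE_space) auto
  then show False by simp
qed

lemma Pi_pmf_pair:
  assumes "finite A" "a \<in> A" "b \<in> A" "a \<noteq> b"
  shows "map_pmf (\<lambda>f. (f a, f b)) (Pi_pmf A dflt p) = pair_pmf (p a) (p b)"
proof -
  have "Pi_pmf {a, b} dflt p = map_pmf (\<lambda>f x. if x \<in> {a,b} then f x else dflt) (Pi_pmf A dflt p)"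
    using assms by (intro Pi_pmf_subset) auto
  then have "map_pmf (\<lambda>f. (f a, f b)) (Pi_pmf {a, b} dflt p) = map_pmf (\<lambda>f. (f a, f b)) (Pi_pmf A dflt p)"
    by (simp add: pmf.map_comp o_def)
  moreover have "map_pmf (\<lambda>f. (f a, f b)) (Pi_pmf {a, b} dflt p) = pair_pmf (p a) (p b)"
    using assms(4)
    by (simp add: Pi_pmf_insert Pi_pmf_singleton pmf.map_comp o_def pair_map_pmf2 case_prod_unfold)
  ultimately show ?thesis by simp
qed

lemma mat_eq: "{U. is_matrix k w U} = {xs. set xs \<subseteq> rowsS w \<and> length xs = k}"
  by (auto simp: is_matrix_def rowsS_def)

lemma mat_finite[simp]: "finite {U. is_matrix k w U}"
  unfolding mat_eq by (rule finite_lists_length_eq) simp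

lemma mat_card: "card {U. is_matrix k w U} = 2 ^ (k * w)"
  unfolding mat_eq by (subst card_lists_length_eq) (simp_all add: rowsS_card[of w] power_mult[symmetric] mult.commute)

lemma mat_nonempty[simp]: "{U. is_matrix k w U} \<noteq> {}"
proof -
  have "is_matrix k w (replicate k (replicate w True))" by (simp add: is_matrix_def)
  then show ?thesis by blast
qed

lemma error_prob_eq:
  "error_prob pc pe ps l k w enc dec =
   (\<Sum>U\<in>{U. is_matrix k w U}. measure_pmf.prob (outer_channel pc pe ps l (enc U)) {Z. dec Z \<noteq> U})
     / card {U. is_matrix k w U}"
proof -
  have fin: "finite {U. is_matrix k w U}" and ne: "{U. is_matrix k w U} \<noteq> {}" by (rule mat_finite, rule mat_nonempty)
  show ?thesis unfolding error_prob_def prob_bind_pmf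
    using fin ne by (simp add: integral_pmf_of_set vimage_def)
qed




locale codesetup = chan +
  fixes n k w :: nat and \<tau> \<epsilon> :: real
  assumes n: "n > 0" and kwnl: "k * w \<le> n * l" and nl: "real n \<le> 2 ^ l"
    and \<tau>: "\<tau> = (pc - \<epsilon>) * n" and e: "\<epsilon> \<ge> 0" and \<tau>n: "\<tau> \<le> n"
begin

abbreviation "Msg \<equiv> {U. is_matrix k w U}"
definition "T = nat \<lceil>\<tau>\<rceil>"
definition "Bd = real (n choose T) * (real n / 2 ^ l) ^ T"
definition "good X Z \<longleftrightarrow> \<tau> \<le> real (goodc X Z)"
definition "dec f Z = (SOME U. U \<in> Msg \<and> good (f U) Z \<and> (\<forall>U'\<in>Msg. good (f U') Z \<longrightarrow> U' = U))"
abbreviation "OC X \<equiv> outer_channel pc pe ps l X"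

lemma T_le_n: "T \<le> n"
  using \<tau>n by (simp add: T_def nat_le_iff ceiling_le_iff)

lemma Bd_nonneg: "Bd \<ge> 0" by (simp add: Bd_def)

lemma good_bound:
  assumes "length Z = n"
  shows "measure_pmf.prob (rm l n) {X'. good X' Z} \<le> Bd"
proof -
  define S where "S = Some -` set Z"
  have finS: "finite S" unfolding S_def by (rule finite_vimageI) (auto simp: inj_on_def)
  have "card S \<le> card (set Z)"
    unfolding S_def by (rule card_inj_on_le[of Some]) (auto simp: inj_on_def)
  also have "... \<le> n" using assms card_length by metis
  finally have cS: "real (card S) \<le> real n" by simp
  have "{X'. good X' Z} \<subseteq> {X'. T \<le> length (filter (\<lambda>r. r \<in> S) X')}"
    by (auto simp: good_def goodc_def T_def S_def nat_le_iff ceiling_le_iff)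
  then have "measure_pmf.prob (rm l n) {X'. good X' Z}
      \<le> measure_pmf.prob (rm l n) {X'. T \<le> length (filter (\<lambda>r. r \<in> S) X')}"
    by (rule measure_pmf.finite_measure_mono) simp
  also have "... \<le> Bd" unfolding Bd_def by (rule rm_count[OF finS cS])
  finally show ?thesis .
qed

lemma coll_bound:
  assumes "length X = n"
  shows "measure_pmf.prob (rm l n) {X'. X' = X} \<le> Bd"
proof -
  have fin: "finite (set X)" by simp
  have "card (set X) \<le> length X" by (rule card_length)
  then have c: "real (card (set X)) \<le> real n" using assms by simp
  have "{X'. X' = X} \<subseteq> {X'. n \<le> length (filter (\<lambda>r. r \<in> set X) X')}"
  proof
    fix X' assume "X' \<in> {X'. X' = X}"
    then have "X' = X" by simp
    moreover have "filter (\<lambda>r. r \<in> set X) X = X" by (rule filter_True) simp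
    ultimately show "X' \<in> {X'. n \<le> length (filter (\<lambda>r. r \<in> set X) X')}" using assms by simp
  qed
  then have "measure_pmf.prob (rm l n) {X'. X' = X}
      \<le> measure_pmf.prob (rm l n) {X'. n \<le> length (filter (\<lambda>r. r \<in> set X) X')}"
    by (rule measure_pmf.finite_measure_mono) simp
  also have "... \<le> real (n choose n) * (real n / 2 ^ l) ^ n" by (rule rm_count[OF fin c])
  also have "... = (real n / 2 ^ l) ^ n" by simp
  also have "... \<le> (real n / 2 ^ l) ^ T"
  proof (rule power_decreasing)
    show "T \<le> n" by (rule T_le_n)
    show "0 \<le> real n / 2 ^ l" by simp
    show "real n / 2 ^ l \<le> 1" using nl by simp
  qed
  also have "... \<le> Bd"
  proof -
    have "0 < n choose T" using T_le_n by (rule zero_less_binomial)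
    then have "1 \<le> real (n choose T)" by linarith
    moreover have "0 \<le> (real n / 2 ^ l) ^ T" by simp
    ultimately have "1 * (real n / 2 ^ l) ^ T \<le> real (n choose T) * (real n / 2 ^ l) ^ T"
      by (rule mult_right_mono)
    then show ?thesis unfolding Bd_def by simp
  qed
  finally show ?thesis .
qed

lemma err_split:
  assumes U: "U \<in> Msg"
  shows "measure_pmf.prob (OC (f U)) {Z. dec f Z \<noteq> U}
     \<le> measure_pmf.prob (OC (f U)) {Z. \<not> good (f U) Z}
       + (\<Sum>U'\<in>Msg - {U}. measure_pmf.prob (OC (f U)) {Z. good (f U') Z})"
proof -
  have sub: "{Z. dec f Z \<noteq> U} \<subseteq> {Z. \<not> good (f U) Z} \<union> (\<Union>U'\<in>Msg - {U}. {Z. good (f U') Z})"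
  proof
    fix Z assume Z: "Z \<in> {Z. dec f Z \<noteq> U}"
    show "Z \<in> {Z. \<not> good (f U) Z} \<union> (\<Union>U'\<in>Msg - {U}. {Z. good (f U') Z})"
    proof (rule ccontr)
      assume "\<not> ?thesis"
      then have g: "good (f U) Z" and o: "\<forall>U'\<in>Msg. good (f U') Z \<longrightarrow> U' = U" by auto
      have "dec f Z = U" unfolding dec_def
        by (rule some_equality) (use U g o in blast)+
      then show False using Z by simp
    qed
  qed
  have a: "measure_pmf.prob (OC (f U)) {Z. dec f Z \<noteq> U}
     \<le> measure_pmf.prob (OC (f U)) ({Z. \<not> good (f U) Z} \<union> (\<Union>U'\<in>Msg - {U}. {Z. good (f U') Z}))"
    by (rule measure_pmf.finite_measure_mono[OF sub]) simp
  have b: "measure_pmf.prob (OC (f U)) ({Z. \<not> good (f U) Z} \<union> (\<Union>U'\<in>Msg - {U}. {Z. good (f U') Z})) \<le> measure_pmf.prob (OC (f U)) {Z. \<not> good (f U) Z}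
       + measure_pmf.prob (OC (f U)) (\<Union>U'\<in>Msg - {U}. {Z. good (f U') Z})"
    by (rule measure_Un_le) auto
  have c: "measure_pmf.prob (OC (f U)) (\<Union>U'\<in>Msg - {U}. {Z. good (f U') Z})
      \<le> (\<Sum>U'\<in>Msg - {U}. measure_pmf.prob (OC (f U)) {Z. good (f U') Z})"
    by (rule measure_pmf.finite_measure_subadditive_finite) auto
  from a b c show ?thesis by linarith
qed

end



lemma integrable_bounded_pmf:
  fixes g :: "'a \<Rightarrow> real"
  assumes "\<And>x. \<bar>g x\<bar> \<le> c"
  shows "integrable (measure_pmf p) g"
  by (rule measure_pmf.integrable_const_bound[where B=c]) (use assms in auto)

lemma exp_pair_pmf:
  fixes h :: "'a \<times> 'b \<Rightarrow> real"
  assumes h0: "\<And>x. 0 \<le> h x" and h1: "\<And>x. h x \<le> 1"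
  shows "measure_pmf.expectation (pair_pmf A B) h =
         measure_pmf.expectation A (\<lambda>a. measure_pmf.expectation B (\<lambda>b. h (a,b)))"
proof -
  have ab: "\<bar>h x\<bar> \<le> 1" for x using h0 h1 by (simp add: abs_le_iff)
  have "ennreal (measure_pmf.expectation (pair_pmf A B) h) = (\<integral>\<^sup>+x. ennreal (h x) \<partial>pair_pmf A B)"
    by (rule nn_integral_eq_integral[symmetric]) (auto intro: integrable_bounded_pmf ab h0)
  also have "... = (\<integral>\<^sup>+a. \<integral>\<^sup>+b. ennreal (h (a,b)) \<partial>B \<partial>A)" by (rule nn_integral_pair_pmf')
  also have "... = (\<integral>\<^sup>+a. ennreal (measure_pmf.expectation B (\<lambda>b. h (a,b))) \<partial>A)"
    by (intro nn_integral_cong nn_integral_eq_integral) (auto intro: integrable_bounded_pmf ab h0)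
  also have "... = ennreal (measure_pmf.expectation A (\<lambda>a. measure_pmf.expectation B (\<lambda>b. h (a,b))))"
  proof (rule nn_integral_eq_integral)
    have "\<bar>measure_pmf.expectation B (\<lambda>b. h (a,b))\<bar> \<le> 1" for a
    proof -
      have "0 \<le> measure_pmf.expectation B (\<lambda>b. h (a,b))" by (intro integral_nonneg_AE) (auto intro: h0)
      moreover have "measure_pmf.expectation B (\<lambda>b. h (a,b)) \<le> measure_pmf.expectation B (\<lambda>b. 1)"
        by (intro integral_mono) (auto intro: integrable_bounded_pmf ab h1)
      ultimately show ?thesis by simp
    qed
    then show "integrable (measure_pmf A) (\<lambda>a. measure_pmf.expectation B (\<lambda>b. h (a,b)))"
      by (rule integrable_bounded_pmf)
    show "AE x in measure_pmf A. 0 \<le> measure_pmf.expectation B (\<lambda>b. h (x, b))"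
      by (intro AE_I2 integral_nonneg_AE) (auto intro: h0)
  qed
  finally show ?thesis
    by (subst (asm) ennreal_inj) (auto intro!: integral_nonneg_AE h0)
qed

lemma exp_le:
  fixes g :: "'a \<Rightarrow> real"
  assumes "integrable (measure_pmf p) g" "\<And>x. x \<in> set_pmf p \<Longrightarrow> g x \<le> c"
  shows "measure_pmf.expectation p g \<le> c"
proof -
  have "measure_pmf.expectation p g \<le> measure_pmf.expectation p (\<lambda>_. c)"
    by (intro integral_mono_AE assms(1)) (auto intro!: AE_pmfI assms(2))
  then show ?thesis by simp
qed

lemma exp01:
  fixes g :: "'a \<Rightarrow> real"
  assumes "\<And>x. 0 \<le> g x" "\<And>x. g x \<le> 1"
  shows "\<bar>measure_pmf.expectation p g\<bar> \<le> 1"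
proof -
  have "0 \<le> measure_pmf.expectation p g" by (intro integral_nonneg_AE) (auto intro: assms)
  moreover have "measure_pmf.expectation p g \<le> 1"
  proof (rule exp_le)
    show "integrable (measure_pmf p) g"
      by (rule integrable_bounded_pmf[where c=1]) (use assms in \<open>simp add: abs_le_iff\<close>)
  qed (rule assms)
  ultimately show ?thesis by simp
qed

lemma prob_abs_le1: "\<bar>measure_pmf.prob p A\<bar> \<le> 1" by simp

context codesetup begin

definition "CP = Pi_pmf Msg [] (\<lambda>_. rm l n)"
definition "errU f U = measure_pmf.prob (OC (f U)) {Z. dec f Z \<noteq> U}"
definition "Gf f = (\<Sum>U\<in>Msg. errU f U + (\<Sum>U'\<in>Msg - {U}. indicator {f U} (f U'))) / real (card Msg)"
definition "tlf X = measure_pmf.prob (OC X) {Z. \<not> good X Z}"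
definition "gdf X X' = measure_pmf.prob (OC X) {Z. good X' Z}"
definition "clf X X' = (indicator {X} X' :: real)"
definition "Hf f = (\<Sum>U\<in>Msg. tlf (f U) + (\<Sum>U'\<in>Msg - {U}. gdf (f U) (f U') + clf (f U) (f U'))) / real (card Msg)"

lemma Gf_le_Hf: "Gf f \<le> Hf f"
  unfolding Gf_def Hf_def
proof (intro divide_right_mono sum_mono)
  fix U assume U: "U \<in> Msg"
  have "errU f U \<le> tlf (f U) + (\<Sum>U'\<in>Msg - {U}. gdf (f U) (f U'))"
    unfolding errU_def tlf_def gdf_def by (rule err_split[OF U])
  then show "errU f U + (\<Sum>U'\<in>Msg - {U}. indicator {f U} (f U'))
          \<le> tlf (f U) + (\<Sum>U'\<in>Msg - {U}. gdf (f U) (f U') + clf (f U) (f U'))"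
    by (simp add: sum.distrib clf_def)
qed simp

lemma OC_len:
  assumes "length X = n" "Z \<in> set_pmf (OC X)"
  shows "length Z = n"
proof -
  obtain Y where Y: "Y \<in> set_pmf (ch1 pc pe ps l X)" and Z: "Z \<in> set_pmf (ch2 Y)"
    using assms(2) unfolding outer_channel_def by auto
  show ?thesis using set_pmf_ch1[OF Y] ch2_support(2)[OF Z] assms(1) by simp
qed

lemma tlf_abs[simp]: "\<bar>tlf X\<bar> \<le> 1" by (simp add: tlf_def)
lemma gdf_abs[simp]: "\<bar>gdf X X'\<bar> \<le> 1" by (simp add: gdf_def)
lemma clf_abs[simp]: "\<bar>clf X X'\<bar> \<le> 1" by (simp add: clf_def indicator_def)
lemma tlf_nonneg: "0 \<le> tlf X" by (simp add: tlf_def)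
lemma gdf_nonneg: "0 \<le> gdf X X'" by (simp add: gdf_def)
lemma clf_nonneg: "0 \<le> clf X X'" by (simp add: clf_def)
lemma tlf_le1: "tlf X \<le> 1" by (simp add: tlf_def)
lemma gdf_le1: "gdf X X' \<le> 1" by (simp add: gdf_def)
lemma clf_le1: "clf X X' \<le> 1" by (simp add: clf_def indicator_def)

lemma int_tlf[simp]: "integrable (measure_pmf p) (\<lambda>x. tlf (g x))"
  by (rule integrable_bounded_pmf[where c=1]) simp
lemma int_gdf[simp]: "integrable (measure_pmf p) (\<lambda>x. gdf (g x) (h x))"
  by (rule integrable_bounded_pmf[where c=1]) simp
lemma int_clf[simp]: "integrable (measure_pmf p) (\<lambda>x. clf (g x) (h x))"
  by (rule integrable_bounded_pmf[where c=1]) simp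

lemma E_tl:
  assumes U: "U \<in> Msg"
  shows "measure_pmf.expectation CP (\<lambda>f. tlf (f U)) \<le> exp (-2 * real n * \<epsilon>^2)"
proof -
  have "measure_pmf.expectation CP (\<lambda>f. tlf (f U)) = measure_pmf.expectation (map_pmf (\<lambda>f. f U) CP) tlf"
    by simp
  also have "map_pmf (\<lambda>f. f U) CP = rm l n" unfolding CP_def using U by (simp add: Pi_pmf_component)
  also have "measure_pmf.expectation (rm l n) tlf \<le> exp (-2 * real n * \<epsilon>^2)"
  proof (rule exp_le)
    show "integrable (measure_pmf (rm l n)) tlf" by (rule integrable_bounded_pmf[where c=1]) simp
    fix X assume "X \<in> set_pmf (rm l n)"
    then have X: "is_matrix n l X" by (rule set_rm)
    have "tlf X = measure_pmf.prob (OC X) {Z. real (goodc X Z) < (pc - \<epsilon>) * n}"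
      unfolding tlf_def good_def by (simp add: \<tau> not_le)
    also have "... \<le> exp (-2 * real n * \<epsilon>^2)"
      using X n e by (intro tail_bound) (auto simp: is_matrix_def)
    finally show "tlf X \<le> exp (-2 * real n * \<epsilon>^2)" .
  qed
  finally show ?thesis .
qed

lemma E_pair:
  fixes h :: "bool list list \<times> bool list list \<Rightarrow> real"
  assumes U: "U \<in> Msg" "U' \<in> Msg" "U \<noteq> U'" and h0: "\<And>x. 0 \<le> h x" and h1: "\<And>x. h x \<le> 1"
  shows "measure_pmf.expectation CP (\<lambda>f. h (f U, f U')) =
         measure_pmf.expectation (rm l n) (\<lambda>X. measure_pmf.expectation (rm l n) (\<lambda>X'. h (X, X')))"
proof -
  have "measure_pmf.expectation CP (\<lambda>f. h (f U, f U')) =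
        measure_pmf.expectation (map_pmf (\<lambda>f. (f U, f U')) CP) h"
    by (rule integral_map_pmf[symmetric])
  also have "map_pmf (\<lambda>f. (f U, f U')) CP = pair_pmf (rm l n) (rm l n)"
    unfolding CP_def using U by (subst Pi_pmf_pair) auto
  also have "measure_pmf.expectation (pair_pmf (rm l n) (rm l n)) h =
         measure_pmf.expectation (rm l n) (\<lambda>X. measure_pmf.expectation (rm l n) (\<lambda>X'. h (X, X')))"
    by (rule exp_pair_pmf[OF h0 h1])
  finally show ?thesis .
qed

lemma E_gd:
  assumes U: "U \<in> Msg" "U' \<in> Msg" "U \<noteq> U'"
  shows "measure_pmf.expectation CP (\<lambda>f. gdf (f U) (f U')) \<le> Bd"
proof -
  have "measure_pmf.expectation CP (\<lambda>f. gdf (f U) (f U')) =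
        measure_pmf.expectation (rm l n) (\<lambda>X. measure_pmf.expectation (rm l n) (\<lambda>X'. gdf X X'))"
  proof -
    have a: "\<And>x. 0 \<le> gdf (fst x) (snd x)" by (rule gdf_nonneg)
    have b: "\<And>x. gdf (fst x) (snd x) \<le> 1" by (rule gdf_le1)
    show ?thesis using E_pair[OF U, where h="\<lambda>x. gdf (fst x) (snd x)", OF a b] by simp
  qed
  also have "... \<le> Bd"
  proof (rule exp_le)
    show "integrable (measure_pmf (rm l n)) (\<lambda>X. measure_pmf.expectation (rm l n) (\<lambda>X'. gdf X X'))"
      by (rule integrable_bounded_pmf[where c=1]) (intro exp01 gdf_nonneg gdf_le1)
    fix X assume "X \<in> set_pmf (rm l n)"
    then have X: "length X = n" using set_rm by (auto simp: is_matrix_def)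
    have "measure_pmf.expectation (rm l n) (\<lambda>X'. gdf X X') =
          measure_pmf.expectation (OC X) (\<lambda>Z. measure_pmf.prob (rm l n) {X'. good X' Z})"
      unfolding gdf_def by (rule swap_exp)
    also have "... \<le> Bd"
      by (rule exp_le) (auto intro: integrable_bounded_pmf[where c=1] good_bound OC_len[OF X])
    finally show "measure_pmf.expectation (rm l n) (\<lambda>X'. gdf X X') \<le> Bd" .
  qed
  finally show ?thesis .
qed

lemma E_cl:
  assumes U: "U \<in> Msg" "U' \<in> Msg" "U \<noteq> U'"
  shows "measure_pmf.expectation CP (\<lambda>f. clf (f U) (f U')) \<le> Bd"
proof -
  have "measure_pmf.expectation CP (\<lambda>f. clf (f U) (f U')) =
        measure_pmf.expectation (rm l n) (\<lambda>X. measure_pmf.expectation (rm l n) (\<lambda>X'. clf X X'))"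
  proof -
    have a: "\<And>x. 0 \<le> clf (fst x) (snd x)" by (rule clf_nonneg)
    have b: "\<And>x. clf (fst x) (snd x) \<le> 1" by (rule clf_le1)
    show ?thesis using E_pair[OF U, where h="\<lambda>x. clf (fst x) (snd x)", OF a b] by simp
  qed
  also have "... \<le> Bd"
  proof (rule exp_le)
    show "integrable (measure_pmf (rm l n)) (\<lambda>X. measure_pmf.expectation (rm l n) (\<lambda>X'. clf X X'))"
      by (rule integrable_bounded_pmf[where c=1]) (simp add: clf_def)
    fix X assume "X \<in> set_pmf (rm l n)"
    then have X: "length X = n" using set_rm by (auto simp: is_matrix_def)
    have "measure_pmf.expectation (rm l n) (\<lambda>X'. clf X X') = measure_pmf.prob (rm l n) {X'. X' = X}"
      by (simp add: clf_def)
    also have "... \<le> Bd" by (rule coll_bound[OF X])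
    finally show "measure_pmf.expectation (rm l n) (\<lambda>X'. clf X X') \<le> Bd" .
  qed
  finally show ?thesis .
qed

end




context codesetup begin

lemma errU_abs[simp]: "\<bar>errU f U\<bar> \<le> 1" by (simp add: errU_def)

lemma int_Gf: "integrable (measure_pmf CP) Gf"
proof -
  have a: "integrable (measure_pmf CP) (\<lambda>f. errU f U)" for U
    by (rule integrable_bounded_pmf[where c=1]) simp
  have b: "integrable (measure_pmf CP) (\<lambda>f. indicator {f U} (f U') :: real)" for U U'
    by (rule integrable_bounded_pmf[where c=1]) (simp add: indicator_def)
  have "integrable (measure_pmf CP) (\<lambda>f. (\<Sum>U\<in>Msg. errU f U + (\<Sum>U'\<in>Msg - {U}. indicator {f U} (f U') :: real)))"
    by (rule Bochner_Integration.integrable_sum, rule Bochner_Integration.integrable_add, rule a, rule Bochner_Integration.integrable_sum, rule b)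
  then have "integrable (measure_pmf CP) (\<lambda>f. (\<Sum>U\<in>Msg. errU f U + (\<Sum>U'\<in>Msg - {U}. indicator {f U} (f U') :: real)) / real (card Msg))"
    by (rule integrable_divide_zero)
  then show ?thesis unfolding Gf_def[abs_def] .
qed

lemma int_Hf: "integrable (measure_pmf CP) Hf"
  unfolding Hf_def
  by (intro integrable_divide_zero integrable_sum integrable_add) auto

lemma E_Hf: "measure_pmf.expectation CP Hf \<le> exp (-2 * real n * \<epsilon>^2) + 2 * real (card Msg) * Bd"
proof -
  define M where "M = real (card Msg)"
  define a where "a = exp (-2 * real n * \<epsilon>^2)"
  have M0: "M > 0" unfolding M_def using mat_finite mat_nonempty by (simp add: card_gt_0_iff)
  have eq: "measure_pmf.expectation CP Hf =
     (\<Sum>U\<in>Msg. measure_pmf.expectation CP (\<lambda>f. tlf (f U)) +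
        (\<Sum>U'\<in>Msg - {U}. measure_pmf.expectation CP (\<lambda>f. gdf (f U) (f U')) +
              measure_pmf.expectation CP (\<lambda>f. clf (f U) (f U')))) / M"
    unfolding Hf_def M_def
    by (simp add: integral_sum integrable_sum)
  have "(\<Sum>U\<in>Msg. measure_pmf.expectation CP (\<lambda>f. tlf (f U)) +
        (\<Sum>U'\<in>Msg - {U}. measure_pmf.expectation CP (\<lambda>f. gdf (f U) (f U')) +
              measure_pmf.expectation CP (\<lambda>f. clf (f U) (f U'))))
     \<le> (\<Sum>U\<in>Msg. a + (\<Sum>U'\<in>Msg - {U}. Bd + Bd))"
    unfolding a_def by (intro sum_mono add_mono E_tl E_gd E_cl) auto
  also have "... \<le> (\<Sum>U\<in>Msg. a + 2 * M * Bd)"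
  proof (intro sum_mono add_left_mono)
    fix U assume U: "U \<in> Msg"
    have "card (Msg - {U}) \<le> card Msg" by (rule card_mono) auto
    then have "real (card (Msg - {U})) * (2 * Bd) \<le> M * (2 * Bd)"
      unfolding M_def using Bd_nonneg by (intro mult_right_mono) auto
    then show "(\<Sum>U'\<in>Msg - {U}. Bd + Bd) \<le> 2 * M * Bd" by simp
  qed
  also have "... = M * (a + 2 * M * Bd)" by (simp add: M_def)
  finally have "measure_pmf.expectation CP Hf \<le> M * (a + 2 * M * Bd) / M"
    unfolding eq using M0 by (intro divide_right_mono) auto
  moreover have "M * (a + 2 * M * Bd) / M = a + 2 * M * Bd" using M0 by simp
  ultimately show ?thesis by (simp add: a_def M_def)
qed

lemma exists_good_f:
  "\<exists>f\<in>set_pmf CP. Gf f \<le> exp (-2 * real n * \<epsilon>^2) + 2 * real (card Msg) * Bd"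
proof -
  obtain f where f: "f \<in> set_pmf CP" "Gf f \<le> measure_pmf.expectation CP Gf"
    using exists_le_expectation[OF int_Gf] by blast
  have "measure_pmf.expectation CP Gf \<le> measure_pmf.expectation CP Hf"
    by (intro integral_mono int_Gf int_Hf Gf_le_Hf)
  with f E_Hf show ?thesis by force
qed

end



context codesetup begin

lemma main_code:
  "\<exists>enc dec. is_code n l k w enc \<and>
     error_prob pc pe ps l k w enc dec \<le> exp (-2 * real n * \<epsilon>^2) + 2 * real (card Msg) * Bd"
proof -
  define \<delta> where "\<delta> = exp (-2 * real n * \<epsilon>^2) + 2 * real (card Msg) * Bd"
  obtain f where fP: "f \<in> set_pmf CP" and fG: "Gf f \<le> \<delta>"
    using exists_good_f unfolding \<delta>_def by blast
  define Mat where "Mat = {X. is_matrix n l X}"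
  have fmat: "f U \<in> Mat" if "U \<in> Msg" for U
  proof -
    have "f U \<in> set_pmf (rm l n)"
      using fP that unfolding CP_def by (simp add: set_Pi_pmf PiE_dflt_def)
    then show ?thesis unfolding Mat_def using set_rm by simp
  qed
  define Col where "Col = {U\<in>Msg. \<exists>U'\<in>Msg - {U}. f U' = f U}"
  define Gd where "Gd = Msg - Col"
  have finMat: "finite Mat" unfolding Mat_def by simp
  have ColM: "Col \<subseteq> Msg" and GdM: "Gd \<subseteq> Msg" by (auto simp: Col_def Gd_def)
  have finCol: "finite Col" using ColM mat_finite by (rule finite_subset)
  have finGd: "finite Gd" using GdM mat_finite by (rule finite_subset)
  have injGd: "inj_on f Gd"
    by (auto simp: inj_on_def Gd_def Col_def)
  have fGd: "f ` Gd \<subseteq> Mat" using fmat GdM by auto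
  have cardMM: "card Msg \<le> card Mat"
    unfolding Mat_def mat_card using kwnl by (simp add: power_increasing)
  have "card Col \<le> card (Mat - f ` Gd)"
  proof -
    have "card (Mat - f ` Gd) = card Mat - card (f ` Gd)"
      by (rule card_Diff_subset) (use finGd fGd in auto)
    also have "card (f ` Gd) = card Gd" by (rule card_image[OF injGd])
    also have "card Gd = card Msg - card Col"
      unfolding Gd_def by (rule card_Diff_subset[OF finCol ColM])
    finally have "card (Mat - f ` Gd) = card Mat - (card Msg - card Col)" .
    moreover have "card Col \<le> card Msg" by (rule card_mono) (simp_all add: ColM)
    ultimately show ?thesis using cardMM by linarith
  qed
  then obtain h where hC: "h ` Col \<subseteq> Mat - f ` Gd" and hinj: "inj_on h Col"
    using card_le_inj[OF finCol] finMat by blast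
  define enc where "enc U = (if U \<in> Col then h U else f U)" for U
  have enc_mat: "enc U \<in> Mat" if "U \<in> Msg" for U
    using that hC fmat by (auto simp: enc_def)
  have "inj_on enc Msg"
  proof (rule inj_onI)
    fix U1 U2 assume U: "U1 \<in> Msg" "U2 \<in> Msg" and eq: "enc U1 = enc U2"
    show "U1 = U2"
    proof (cases "U1 \<in> Col"; cases "U2 \<in> Col")
      assume "U1 \<in> Col" "U2 \<in> Col"
      then show ?thesis using eq hinj by (auto simp: enc_def inj_on_def)
    next
      assume "U1 \<in> Col" "U2 \<notin> Col"
      then have "h U1 = f U2" "U2 \<in> Gd" using eq U by (auto simp: enc_def Gd_def)
      then show ?thesis using hC \<open>U1 \<in> Col\<close> by auto
    next
      assume "U1 \<notin> Col" "U2 \<in> Col"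
      then have "h U2 = f U1" "U1 \<in> Gd" using eq U by (auto simp: enc_def Gd_def)
      then show ?thesis using hC \<open>U2 \<in> Col\<close> by auto
    next
      assume "U1 \<notin> Col" "U2 \<notin> Col"
      then show ?thesis using eq U injGd by (auto simp: enc_def Gd_def inj_on_def)
    qed
  qed
  then have code: "is_code n l k w enc"
    unfolding is_code_def using enc_mat by (auto simp: Mat_def)
  have trm: "measure_pmf.prob (OC (enc U)) {Z. dec f Z \<noteq> U}
      \<le> errU f U + (\<Sum>U'\<in>Msg - {U}. indicator {f U} (f U'))" if U: "U \<in> Msg" for U
  proof (cases "U \<in> Col")
    case True
    then obtain U' where U': "U' \<in> Msg - {U}" "f U' = f U" by (auto simp: Col_def)
    have "measure_pmf.prob (OC (enc U)) {Z. dec f Z \<noteq> U} \<le> 1" by simp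
    also have "1 = (indicator {f U} (f U') :: real)" using U' by simp
    also have "... \<le> (\<Sum>U'\<in>Msg - {U}. indicator {f U} (f U') :: real)"
      by (rule member_le_sum[where f="\<lambda>U'. indicator {f U} (f U') :: real"]) (use U' in auto)
    also have "... \<le> errU f U + (\<Sum>U'\<in>Msg - {U}. indicator {f U} (f U'))"
      by (simp add: errU_def)
    finally show ?thesis .
  next
    case False
    then have "measure_pmf.prob (OC (enc U)) {Z. dec f Z \<noteq> U} = errU f U"
      by (simp add: enc_def errU_def)
    moreover have "0 \<le> (\<Sum>U'\<in>Msg - {U}. indicator {f U} (f U') :: real)"
      by (rule sum_nonneg) simp
    ultimately show ?thesis by linarith
  qed
  have "error_prob pc pe ps l k w enc (dec f)
      = (\<Sum>U\<in>Msg. measure_pmf.prob (OC (enc U)) {Z. dec f Z \<noteq> U}) / real (card Msg)"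
    by (rule error_prob_eq)
  also have "... \<le> Gf f"
    unfolding Gf_def by (intro divide_right_mono sum_mono trm) auto
  also have "... \<le> \<delta>" by (rule fG)
  finally show ?thesis using code unfolding \<delta>_def by blast
qed

lemma main_code':
  "\<exists>enc dec. is_code n l k w enc \<and>
     error_prob pc pe ps l k w enc dec \<le> exp (-2 * real n * \<epsilon>^2) +
        2 * real (2 ^ (k * w) :: nat) * (real (n choose nat \<lceil>\<tau>\<rceil>) * (real n / 2 ^ l) ^ nat \<lceil>\<tau>\<rceil>)"
  using main_code by (simp add: Bd_def T_def mat_card)

end



lemma bound_real:
  fixes pc \<epsilon> \<tau> :: real and n l k w :: nat
  assumes n: "n \<ge> 1" and w: "real w = real l - log 2 (real n)" and k: "real k = real n * (pc - 2 * \<epsilon>)"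
    and ew: "\<epsilon> * real w \<ge> 2" and \<tau>: "\<tau> = (pc - \<epsilon>) * real n"
  shows "real (2 ^ (k * w)) * (real (n choose nat \<lceil>\<tau>\<rceil>) * (real n / 2 ^ l) ^ nat \<lceil>\<tau>\<rceil>)
         \<le> 2 powr (- real n)"
proof -
  define T where "T = nat \<lceil>\<tau>\<rceil>"
  have Tge: "real T \<ge> \<tau>" unfolding T_def by linarith
  have n0: "real n > 0" using n by simp
  have w0: "real w \<ge> 0" by simp
  have q: "real n / 2 ^ l = 2 powr (- real w)"
  proof -
    have "2 powr (- real w) = 2 powr (log 2 (real n) - real l)" using w by simp
    also have "... = real n / 2 powr real l" using n0 by (simp add: powr_diff)
    also have "... = real n / 2 ^ l" by (simp add: powr_realpow)
    finally show ?thesis by simp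
  qed
  have "(real n / 2 ^ l) ^ T = 2 powr (real T * (- real w))"
    unfolding q by (simp add: powr_power)
  also have "... \<le> 2 powr (- real w * \<tau>)"
  proof (rule powr_mono)
    have "\<tau> * real w \<le> real T * real w" using Tge w0 by (rule mult_right_mono)
    then show "real T * - real w \<le> - real w * \<tau>" by (simp add: mult.commute)
  qed simp
  finally have A: "(real n / 2 ^ l) ^ T \<le> 2 powr (- real w * \<tau>)" .
  have B: "real (n choose T) \<le> 2 powr real n"
  proof -
    have "n choose T \<le> 2 ^ n" by (rule binomial_le_pow2)
    then have "real (n choose T) \<le> 2 ^ n" by (metis of_nat_le_iff of_nat_numeral of_nat_power)
    then show ?thesis by (simp add: powr_realpow)
  qed
  have C: "real (2 ^ (k * w) :: nat) = 2 powr (real k * real w)"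
    by (simp add: powr_realpow[symmetric])
  have "real (2 ^ (k * w)) * (real (n choose T) * (real n / 2 ^ l) ^ T)
      \<le> 2 powr (real k * real w) * (2 powr real n * 2 powr (- real w * \<tau>))"
    unfolding C by (intro mult_left_mono mult_mono A B) auto
  also have "... = 2 powr (real k * real w + real n + - real w * \<tau>)"
    by (simp only: powr_add mult.assoc)
  also have "real k * real w + real n + - real w * \<tau> = real n * (1 - \<epsilon> * real w)"
    unfolding k \<tau> by (simp add: algebra_simps)
  also have "2 powr (real n * (1 - \<epsilon> * real w)) \<le> 2 powr (- real n)"
  proof (rule powr_mono)
    have "real n * (1 - \<epsilon> * real w) \<le> real n * (1 - 2)"
      using ew n0 by (intro mult_left_mono) auto
    then show "real n * (1 - \<epsilon> * real w) \<le> - real n" by simp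
  qed simp
  finally show ?thesis unfolding T_def .
qed




lemma exp_neg_lim:
  fixes c :: real assumes c: "c > 0"
  shows "((\<lambda>x::real. exp (- c * x)) \<longlongrightarrow> 0) at_top"
proof -
  have "filterlim (\<lambda>x::real. c * x) at_top at_top"
    by (rule filterlim_tendsto_pos_mult_at_top[OF tendsto_const c filterlim_ident])
  then have "filterlim (\<lambda>x::real. - (c * x)) at_bot at_top"
    by (simp add: filterlim_uminus_at_top)
  from filterlim_compose[OF exp_at_bot this] show ?thesis by simp
qed

lemma lim_a:
  fixes c :: real assumes "c > 0"
  shows "((\<lambda>x::real. exp (- c * x) + 2 * 2 powr (- x)) \<longlongrightarrow> 0) at_top"
proof -
  have e2: "2 powr (- x) = exp (- ln 2 * x)" for x :: real by (simp add: powr_def)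
  have "((\<lambda>x::real. exp (- ln 2 * x)) \<longlongrightarrow> 0) at_top" by (rule exp_neg_lim) simp
  then have "((\<lambda>x::real. 2 * exp (- ln 2 * x)) \<longlongrightarrow> 0) at_top"
    by (rule tendsto_mult_right_zero)
  from tendsto_add[OF exp_neg_lim[OF assms] this] show ?thesis by (simp add: e2)
qed

theorem lemma1:
  fixes pc pe ps \<beta> \<epsilon> :: real and n l k w :: "nat \<Rightarrow> nat"
  assumes "pc \<ge> 0" and "pe \<ge> 0" and "ps \<ge> 0" and "pc + pe + ps = 1"
    and "\<forall>j. ps / (2 ^ l j - 1) < pc"
    and "\<beta> > 1" and "\<epsilon> > 0"
    and "filterlim n at_top sequentially"
    and "\<forall>j. real (l j) = \<beta> * log 2 (real (n j))"
    and "\<forall>j. real (k j) = real (n j) * (pc - 2 * \<epsilon>)"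
    and "\<forall>j. real (w j) = real (l j) - log 2 (real (n j))"
  shows "\<exists>enc dec. (\<forall>j. is_code (n j) (l j) (k j) (w j) (enc j)) \<and>
           (\<lambda>j. error_prob pc pe ps (l j) (k j) (w j) (enc j) (dec j)) \<longlonglongrightarrow> 0"
proof -
  have pc1: "pc \<le> 1" using assms(2,3,4) by linarith
  have e: "\<epsilon> > 0" by (rule assms(7))
  have b: "\<beta> > 1" by (rule assms(6))
  have lj: "real (l j) = \<beta> * log 2 (real (n j))" for j using assms(9) by blast
  have kj: "real (k j) = real (n j) * (pc - 2 * \<epsilon>)" for j using assms(10) by blast
  have wj: "real (w j) = real (l j) - log 2 (real (n j))" for j using assms(11) by blast
  have lg0: "log 2 (real (n j)) \<ge> 0" for j
    by (cases "n j = 0") (auto simp: log_def)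
  have kwnl: "k j * w j \<le> n j * l j" for j
  proof -
    have "real (k j) \<le> real (n j)"
      using kj[of j] pc1 e by (simp add: mult_left_le)
    moreover have "real (w j) \<le> real (l j)" using wj[of j] lg0[of j] by simp
    ultimately have "real (k j) * real (w j) \<le> real (n j) * real (l j)"
      by (intro mult_mono) auto
    then show ?thesis by (metis of_nat_le_iff of_nat_mult)
  qed
  have ex_code: "\<exists>e. is_code (n j) (l j) (k j) (w j) e" for j
  proof -
    have "card {U. is_matrix (k j) (w j) U} \<le> card {X. is_matrix (n j) (l j) X}"
      unfolding mat_card using kwnl[of j] by (simp add: power_increasing)
    then obtain g where g: "g ` {U. is_matrix (k j) (w j) U} \<subseteq> {X. is_matrix (n j) (l j) X}"
        "inj_on g {U. is_matrix (k j) (w j) U}"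
      using card_le_inj[OF mat_finite mat_finite] by blast
    then have "is_code (n j) (l j) (k j) (w j) g" unfolding is_code_def by auto
    then show ?thesis by blast
  qed
  define a where "a j = exp (- (2 * \<epsilon>^2) * real (n j)) + 2 * 2 powr (- real (n j))" for j
  define nice where "nice j \<longleftrightarrow> n j \<ge> 2 \<and> \<epsilon> * real (w j) \<ge> 2" for j
  have nice_bound: "\<exists>e d. is_code (n j) (l j) (k j) (w j) e \<and>
        error_prob pc pe ps (l j) (k j) (w j) e d \<le> a j" if nj: "nice j" for j
  proof -
    define \<tau> where "\<tau> = (pc - \<epsilon>) * real (n j)"
    have n2: "n j \<ge> 2" and ew: "\<epsilon> * real (w j) \<ge> 2" using nj by (auto simp: nice_def)
    have lg1: "log 2 (real (n j)) \<ge> 1" using n2 by simp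
    have l1: "l j \<ge> 1"
    proof -
      have "1 * 1 \<le> \<beta> * log 2 (real (n j))" using lg1 b by (intro mult_mono) auto
      then have "real (l j) \<ge> 1" using lj[of j] by simp
      then show ?thesis by simp
    qed
    have nl: "real (n j) \<le> 2 ^ l j"
    proof -
      have "log 2 (real (n j)) \<le> real (l j)"
        using lj[of j] lg0[of j] b by (simp add: mult_le_cancel_right1 order_less_imp_le)
      then have "2 powr log 2 (real (n j)) \<le> 2 powr real (l j)" by (intro powr_mono) auto
      then show ?thesis using n2 by (simp add: powr_realpow)
    qed
    have cs: "codesetup pc pe ps (l j) (n j) (k j) (w j) \<tau> \<epsilon>"
      unfolding codesetup_def codesetup_axioms_def chan_def
      using assms(1-4) l1 n2 kwnl[of j] nl e pc1
      by (auto simp: \<tau>_def mult_left_le)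
    obtain e d where ed: "is_code (n j) (l j) (k j) (w j) e"
      "error_prob pc pe ps (l j) (k j) (w j) e d \<le> exp (-2 * real (n j) * \<epsilon>^2) +
        2 * real (2 ^ (k j * w j) :: nat) * (real (n j choose nat \<lceil>\<tau>\<rceil>) * (real (n j) / 2 ^ l j) ^ nat \<lceil>\<tau>\<rceil>)"
      using codesetup.main_code'[OF cs] by blast
    have "real (2 ^ (k j * w j) :: nat) * (real (n j choose nat \<lceil>\<tau>\<rceil>) * (real (n j) / 2 ^ l j) ^ nat \<lceil>\<tau>\<rceil>)
        \<le> 2 powr (- real (n j))"
      by (rule bound_real[OF _ wj kj ew \<tau>_def]) (use n2 in simp)
    then have "error_prob pc pe ps (l j) (k j) (w j) e d \<le> a j"
      using ed(2) unfolding a_def by (simp add: algebra_simps)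
    then show ?thesis using ed(1) by blast
  qed
  have "\<forall>j. \<exists>p. is_code (n j) (l j) (k j) (w j) (fst p) \<and>
        (nice j \<longrightarrow> error_prob pc pe ps (l j) (k j) (w j) (fst p) (snd p) \<le> a j)"
  proof
    fix j show "\<exists>p. is_code (n j) (l j) (k j) (w j) (fst p) \<and>
        (nice j \<longrightarrow> error_prob pc pe ps (l j) (k j) (w j) (fst p) (snd p) \<le> a j)"
    proof (cases "nice j")
      case True
      then obtain e d where "is_code (n j) (l j) (k j) (w j) e"
        "error_prob pc pe ps (l j) (k j) (w j) e d \<le> a j" using nice_bound by blast
      then show ?thesis by (intro exI[of _ "(e, d)"]) auto
    next
      case False
      obtain e where "is_code (n j) (l j) (k j) (w j) e" using ex_code by blast
      then show ?thesis using False by (intro exI[of _ "(e, undefined)"]) auto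
    qed
  qed
  then obtain P where P: "\<And>j. is_code (n j) (l j) (k j) (w j) (fst (P j))"
    "\<And>j. nice j \<Longrightarrow> error_prob pc pe ps (l j) (k j) (w j) (fst (P j)) (snd (P j)) \<le> a j"
    by metis
  have ev: "eventually nice sequentially"
  proof -
    define c where "c = 2 / (\<epsilon> * (\<beta> - 1))"
    have c0: "c > 0" using e b by (simp add: c_def)
    have "\<forall>Z. eventually (\<lambda>x. Z \<le> n x) sequentially"
      using assms(8) by (simp add: filterlim_at_top)
    then have "eventually (\<lambda>j. max 2 (nat \<lceil>2 powr c\<rceil>) \<le> n j) sequentially"
      by blast
    then show ?thesis
    proof (rule eventually_mono)
      fix j assume nj: "max 2 (nat \<lceil>2 powr c\<rceil>) \<le> n j"
      then have n2: "n j \<ge> 2" by simp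
      have "2 powr c \<le> real (n j)" using nj by linarith
      then have "log 2 (2 powr c) \<le> log 2 (real (n j))"
        using n2 by (subst log_le_cancel_iff) auto
      then have lc: "c \<le> log 2 (real (n j))" by simp
      have "real (w j) = (\<beta> - 1) * log 2 (real (n j))" using wj[of j] lj[of j] by (simp add: algebra_simps)
      then have "\<epsilon> * real (w j) = (\<epsilon> * (\<beta> - 1)) * log 2 (real (n j))" by simp
      also have "... \<ge> (\<epsilon> * (\<beta> - 1)) * c"
        using lc e b by (intro mult_left_mono) auto
      also have "(\<epsilon> * (\<beta> - 1)) * c = 2" using e b by (simp add: c_def)
      finally show "nice j" using n2 by (simp add: nice_def)
    qed
  qed
  have alim: "a \<longlonglongrightarrow> 0"
  proof -
    have rn: "filterlim (\<lambda>j. real (n j)) at_top sequentially"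
      by (rule filterlim_compose[OF filterlim_real_sequentially assms(8)])
    have "((\<lambda>x::real. exp (- (2 * \<epsilon>^2) * x) + 2 * 2 powr (- x)) \<longlongrightarrow> 0) at_top"
      by (rule lim_a) (use e in simp)
    from filterlim_compose[OF this rn] show ?thesis unfolding a_def .
  qed
  define E where "E j = error_prob pc pe ps (l j) (k j) (w j) (fst (P j)) (snd (P j))" for j
  have "E \<longlonglongrightarrow> 0"
  proof (rule tendsto_sandwich[of "\<lambda>_. 0" E sequentially a 0])
    show "eventually (\<lambda>j. 0 \<le> E j) sequentially"
      by (simp add: E_def error_prob_def)
    show "eventually (\<lambda>j. E j \<le> a j) sequentially"
      using ev by (rule eventually_mono) (simp add: E_def P(2))
  qed (simp_all add: alim)
  then have "(\<lambda>j. error_prob pc pe ps (l j) (k j) (w j) ((\<lambda>j. fst (P j)) j) ((\<lambda>j. snd (P j)) j)) \<longlonglongrightarrow> 0"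
    unfolding E_def by simp
  moreover have "\<forall>j. is_code (n j) (l j) (k j) (w j) ((\<lambda>j. fst (P j)) j)" using P(1) by simp
  ultimately show ?thesis
    by (intro exI[of _ "\<lambda>j. fst (P j)"] exI[of _ "\<lambda>j. snd (P j)"]) simp
qed


end
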